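(* Let $\mathbf X,\mathbf Y,\mathbf Z$ be pairwise disjoint node sets in an MPDAG $\mathcal G=(\mathbf V,\mathbf E)$. Suppose there is a proper possibly causal path from $\mathbf X$ to $\mathbf Y$ in $\mathcal G$ that starts with an undirected edge and contains no node of $\mathbf Z$. Then there is such a path $q=\langle X=V_0,V_1,\dots,V_k=Y\rangle$ with $X\in\mathbf X$, $Y\in\mathbf Y$, $k\ge1$, and two DAGs $\mathcal D^1,\mathcal D^2\in[\mathcal G]$ such that the path on the same node sequence is $X\to V_1\to\cdots\to Y$ in $\mathcal D^1$ and is $X\leftarrow V_1\to V_2\to\cdots\to Y$ in $\mathcal D^2$ (that is, $X\leftarrow Y$ when $k=1$).
   Context: An MPDAG $\mathcal G=(\mathbf V,\mathbf E)$ is a graph with directed ($\to$) and undirected ($-$) edges and no directed cycles, obtained from a CPDAG (the graph representing a Markov equivalence class of DAGs) by orienting some undirected edges and closing under Meek's orientation rules R1–R4; every DAG is an MPDAG. $[\mathcal G]$ is the set of DAGs with the same nodes, adjacencies and directed edges as $\mathcal G$. A path is a sequence of distinct nodes with successive nodes adjacent; a path from $\mathbf X$ to $\mathbf Y$ runs from some $X\in\mathbf X$ to some $Y\in\mathbf Y$ and is proper if only its first node is in $\mathbf X$. A path $\langle V_1,\dots,V_k\rangle$ is possibly causal if $\mathcal G$ contains no edge $V_i\leftarrow V_j$ with $1\le i<j\le k$. *)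

theory Defs
  imports Main
begin

text \<open>A partially directed graph on node set V is given by a set D of directed
edges ((a,b) means a -> b) and a symmetric set U of undirected edges.\<close>

definition adj :: "('v \<times> 'v) set \<Rightarrow> ('v \<times> 'v) set \<Rightarrow> 'v \<Rightarrow> 'v \<Rightarrow> bool" where
  "adj D U a b \<longleftrightarrow> (a,b) \<in> D \<or> (b,a) \<in> D \<or> (a,b) \<in> U"

definition wf_pdag :: "'v set \<Rightarrow> ('v \<times> 'v) set \<Rightarrow> ('v \<times> 'v) set \<Rightarrow> bool" where
  "wf_pdag V D U \<longleftrightarrow> finite V \<and> D \<subseteq> V \<times> V \<and> U \<subseteq> V \<times> V \<and> sym U
     \<and> (\<forall>a. (a,a) \<notin> D \<and> (a,a) \<notin> U)
     \<and> (\<forall>a b. (a,b) \<in> D \<longrightarrow> (b,a) \<notin> D \<and> (a,b) \<notin> U)"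

definition is_DAG :: "'v set \<Rightarrow> ('v \<times> 'v) set \<Rightarrow> bool" where
  "is_DAG V D \<longleftrightarrow> wf_pdag V D {} \<and> acyclic D"

definition v_structures :: "('v \<times> 'v) set \<Rightarrow> ('v \<times> 'v \<times> 'v) set" where
  "v_structures D = {(a,c,b). (a,c) \<in> D \<and> (b,c) \<in> D \<and> a \<noteq> b \<and> \<not> adj D {} a b}"

text \<open>Markov equivalence of DAGs (Verma--Pearl characterisation: same skeleton,
same v-structures).\<close>
definition markov_equiv :: "'v set \<Rightarrow> ('v \<times> 'v) set \<Rightarrow> ('v \<times> 'v) set \<Rightarrow> bool" where
  "markov_equiv V D1 D2 \<longleftrightarrow> is_DAG V D1 \<and> is_DAG V D2
     \<and> (\<forall>a b. adj D1 {} a b \<longleftrightarrow> adj D2 {} a b)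
     \<and> v_structures D1 = v_structures D2"

definition is_CPDAG :: "'v set \<Rightarrow> ('v \<times> 'v) set \<Rightarrow> ('v \<times> 'v) set \<Rightarrow> bool" where
  "is_CPDAG V D U \<longleftrightarrow> (\<exists>D0. is_DAG V D0
     \<and> D = {(a,b). \<forall>D'. markov_equiv V D0 D' \<longrightarrow> (a,b) \<in> D'}
     \<and> U = {(a,b). adj D0 {} a b \<and> (a,b) \<notin> D \<and> (b,a) \<notin> D})"

text \<open>Meek's rules R1--R4: orient the undirected edge a - b as a -> b.\<close>
definition meek_applicable :: "('v \<times> 'v) set \<Rightarrow> ('v \<times> 'v) set \<Rightarrow> 'v \<Rightarrow> 'v \<Rightarrow> bool" where
  "meek_applicable D U a b \<longleftrightarrow> (a,b) \<in> U \<and>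
     ((\<exists>c. (c,a) \<in> D \<and> c \<noteq> b \<and> \<not> adj D U c b)
    \<or> (\<exists>c. (a,c) \<in> D \<and> (c,b) \<in> D)
    \<or> (\<exists>c d. (a,c) \<in> U \<and> (a,d) \<in> U \<and> (c,b) \<in> D \<and> (d,b) \<in> D \<and> c \<noteq> d \<and> \<not> adj D U c d)
    \<or> (\<exists>c d. adj D U a c \<and> (a,d) \<in> U \<and> (d,c) \<in> D \<and> (c,b) \<in> D \<and> b \<noteq> d \<and> \<not> adj D U b d))"

definition meek_step :: "(('v \<times> 'v) set \<times> ('v \<times> 'v) set) \<Rightarrow> (('v \<times> 'v) set \<times> ('v \<times> 'v) set) \<Rightarrow> bool" where
  "meek_step G G' \<longleftrightarrow> (\<exists>a b. meek_applicable (fst G) (snd G) a b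
      \<and> G' = (insert (a,b) (fst G), snd G - {(a,b),(b,a)}))"

definition meek_closure :: "(('v \<times> 'v) set \<times> ('v \<times> 'v) set) \<Rightarrow> (('v \<times> 'v) set \<times> ('v \<times> 'v) set) \<Rightarrow> bool" where
  "meek_closure G0 G \<longleftrightarrow> meek_step\<^sup>*\<^sup>* G0 G \<and> (\<forall>a b. \<not> meek_applicable (fst G) (snd G) a b)"

definition is_MPDAG :: "'v set \<Rightarrow> ('v \<times> 'v) set \<Rightarrow> ('v \<times> 'v) set \<Rightarrow> bool" where
  "is_MPDAG V D U \<longleftrightarrow> wf_pdag V D U \<and> acyclic D \<and>
     (\<exists>DC UC Or. is_CPDAG V DC UC \<and> Or \<subseteq> UC \<and> (\<forall>a b. (a,b) \<in> Or \<longrightarrow> (b,a) \<notin> Or)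
        \<and> meek_closure (DC \<union> Or, UC - (Or \<union> Or\<inverse>)) (D, U))"

definition consistent_DAGs :: "'v set \<Rightarrow> ('v \<times> 'v) set \<Rightarrow> ('v \<times> 'v) set \<Rightarrow> ('v \<times> 'v) set set" where
  "consistent_DAGs V D U = {D'. is_DAG V D' \<and> D \<subseteq> D' \<and> (\<forall>a b. adj D' {} a b \<longleftrightarrow> adj D U a b)}"

definition is_path :: "'v set \<Rightarrow> ('v \<times> 'v) set \<Rightarrow> ('v \<times> 'v) set \<Rightarrow> 'v list \<Rightarrow> bool" where
  "is_path V D U p \<longleftrightarrow> p \<noteq> [] \<and> distinct p \<and> set p \<subseteq> V
     \<and> (\<forall>i. Suc i < length p \<longrightarrow> adj D U (p ! i) (p ! Suc i))"

definition possibly_causal :: "('v \<times> 'v) set \<Rightarrow> 'v list \<Rightarrow> bool" where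
  "possibly_causal D p \<longleftrightarrow> (\<forall>i j. i < j \<and> j < length p \<longrightarrow> (p ! j, p ! i) \<notin> D)"

definition proper_from_to :: "'v set \<Rightarrow> 'v set \<Rightarrow> 'v list \<Rightarrow> bool" where
  "proper_from_to X Y p \<longleftrightarrow> p \<noteq> [] \<and> hd p \<in> X \<and> last p \<in> Y
     \<and> (\<forall>i. 0 < i \<and> i < length p \<longrightarrow> p ! i \<notin> X)"

definition good_path :: "'v set \<Rightarrow> ('v \<times> 'v) set \<Rightarrow> ('v \<times> 'v) set \<Rightarrow> 'v set \<Rightarrow> 'v set \<Rightarrow> 'v set \<Rightarrow> 'v list \<Rightarrow> bool" where
  "good_path V D U X Y Z p \<longleftrightarrow> is_path V D U p \<and> proper_from_to X Y p \<and> possibly_causal D p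
     \<and> length p \<ge> 2 \<and> (p ! 0, p ! 1) \<in> U \<and> set p \<inter> Z = {}"

end

theory Submission
  imports Defs
begin

lemma linext:
  assumes "finite V" and "acyclic R"
  shows "\<exists>f::'v \<Rightarrow> nat. inj_on f V \<and> (\<forall>a b. (a,b) \<in> R \<longrightarrow> a \<in> V \<longrightarrow> b \<in> V \<longrightarrow> f a < f b)"
  using assms(1)
proof (induction V rule: finite_remove_induct)
  case empty
  then show ?case by auto
next
  case (remove A)
  let ?R = "R \<inter> (A \<times> A)"
  have "finite ?R" using remove.hyps(1) by auto
  moreover have "acyclic ?R" using assms(2) acyclic_subset by blast
  ultimately have "wf ?R" by (rule finite_acyclic_wf)
  then obtain m where mA: "m \<in> A" and mmin: "\<forall>y. (y,m) \<in> ?R \<longrightarrow> y \<notin> A"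
    using remove.hyps(2) unfolding wf_eq_minimal by blast
  obtain g :: "'v \<Rightarrow> nat" where ginj: "inj_on g (A - {m})"
    and gm: "\<forall>a b. (a,b) \<in> R \<longrightarrow> a \<in> A - {m} \<longrightarrow> b \<in> A - {m} \<longrightarrow> g a < g b"
    using remove.IH[OF mA] by blast
  define f where "f x = (if x = m then 0 else Suc (g x))" for x
  have "inj_on f A" using ginj unfolding f_def inj_on_def by auto
  moreover have "\<forall>a b. (a,b) \<in> R \<longrightarrow> a \<in> A \<longrightarrow> b \<in> A \<longrightarrow> f a < f b"
  proof (intro allI impI)
    fix a b assume ab: "(a,b) \<in> R" "a \<in> A" "b \<in> A"
    show "f a < f b"
    proof (cases "b = m")
      case True then show ?thesis using mmin ab by auto
    next
      case False
      show ?thesis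
      proof (cases "a = m")
        case True then show ?thesis using False unfolding f_def by auto
      next
        case False2: False
        then show ?thesis using gm ab False unfolding f_def by auto
      qed
    qed
  qed
  ultimately show ?case by blast
qed

lemma acyc_rank:
  assumes acyc: "acyclic D"
    and H: "\<And>a b. a \<in> Q \<Longrightarrow> b \<in> Q \<Longrightarrow> (a,b) \<in> D\<^sup>+ \<Longrightarrow> r a < (r b :: nat)"
    and E: "\<And>a b. (a,b) \<in> E \<Longrightarrow> a \<in> Q \<and> b \<in> Q \<and> r a < r b"
  shows "acyclic (D \<union> E)"
proof -
  have claim: "(x,y) \<in> (D \<union> E)\<^sup>+ \<Longrightarrow> (x,y) \<in> D\<^sup>+ \<or>
      (\<exists>a b. a \<in> Q \<and> b \<in> Q \<and> (x,a) \<in> D\<^sup>* \<and> (b,y) \<in> D\<^sup>* \<and> r a < r b)" for x y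
  proof (induction rule: trancl_induct)
    case (base y)
    then show ?case using E by blast
  next
    case (step y z)
    from step.hyps(2) consider "(y,z) \<in> D" | "(y,z) \<in> E" by blast
    then show ?case
    proof cases
      case 1
      with step.IH show ?thesis by (meson rtrancl_into_rtrancl trancl_into_trancl)
    next
      case 2
      then have yz: "y \<in> Q" "z \<in> Q" "r y < r z" using E by auto
      from step.IH show ?thesis
      proof
        assume "(x,y) \<in> D\<^sup>+"
        then show ?thesis using yz by (meson rtrancl.rtrancl_refl trancl_into_rtrancl)
      next
        assume "\<exists>a b. a \<in> Q \<and> b \<in> Q \<and> (x,a) \<in> D\<^sup>* \<and> (b,y) \<in> D\<^sup>* \<and> r a < r b"
        then obtain a b where ab: "a \<in> Q" "b \<in> Q" "(x,a) \<in> D\<^sup>*" "(b,y) \<in> D\<^sup>*" "r a < r b" by blast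
        have "r b \<le> r y"
        proof (cases "b = y")
          case False
          then have "(b,y) \<in> D\<^sup>+" using ab(4) by (simp add: rtrancl_eq_or_trancl)
          then show ?thesis using H ab(2) yz(1) by fastforce
        qed simp
        then show ?thesis using ab yz by (meson order.strict_trans1 order.strict_trans rtrancl.rtrancl_refl)
      qed
    qed
  qed
  show ?thesis unfolding acyclic_def
  proof (intro allI notI)
    fix x assume "(x,x) \<in> (D \<union> E)\<^sup>+"
    from claim[OF this] show False
    proof
      assume "(x,x) \<in> D\<^sup>+" then show False using acyc unfolding acyclic_def by blast
    next
      assume "\<exists>a b. a \<in> Q \<and> b \<in> Q \<and> (x,a) \<in> D\<^sup>* \<and> (b,x) \<in> D\<^sup>* \<and> r a < r b"
      then obtain a b where ab: "a \<in> Q" "b \<in> Q" "(x,a) \<in> D\<^sup>*" "(b,x) \<in> D\<^sup>*" "r a < r b" by blast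
      have "(b,a) \<in> D\<^sup>*" using ab by auto
      then show False
      proof (cases "b = a")
        case False
        then have "(b,a) \<in> D\<^sup>+" using \<open>(b,a) \<in> D\<^sup>*\<close> by (simp add: rtrancl_eq_or_trancl)
        then show False using H ab by fastforce
      qed (use ab in simp)
    qed
  qed
qed

lemma orient:
  assumes wf: "wf_pdag V D U" and R: "acyclic (D \<union> E)" and EV: "E \<subseteq> V \<times> V"
  shows "\<exists>D'. D' \<in> consistent_DAGs V D U \<and> (\<forall>a b. (a,b) \<in> E \<longrightarrow> adj D U a b \<longrightarrow> (a,b) \<in> D')"
proof -
  have fin: "finite V" and DV: "D \<subseteq> V \<times> V" and UV: "U \<subseteq> V \<times> V" and sU: "sym U"
    and nl: "\<And>a. (a,a) \<notin> D \<and> (a,a) \<notin> U"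
    using wf unfolding wf_pdag_def by auto
  obtain f :: "'a \<Rightarrow> nat" where inj: "inj_on f V"
    and mono: "\<forall>a b. (a,b) \<in> D \<union> E \<longrightarrow> a \<in> V \<longrightarrow> b \<in> V \<longrightarrow> f a < f b"
    using linext[OF fin R] by blast
  define D' where "D' = {(a,b). adj D U a b \<and> f a < f b}"
  have adjV: "adj D U a b \<Longrightarrow> a \<in> V \<and> b \<in> V \<and> a \<noteq> b" for a b
    using DV UV nl unfolding adj_def by blast
  have adjsym: "adj D U a b \<Longrightarrow> adj D U b a" for a b
    using sU unfolding adj_def sym_def by blast
  have tr: "(x,y) \<in> D'\<^sup>+ \<Longrightarrow> f x < f y" for x y
    by (induction rule: trancl_induct) (auto simp: D'_def)
  have "acyclic D'" unfolding acyclic_def using tr by blast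
  moreover have "wf_pdag V D' {}" unfolding wf_pdag_def sym_def
    using fin adjV by (auto simp: D'_def)
  moreover have "D \<subseteq> D'" using mono DV unfolding D'_def adj_def by auto
  moreover have "adj D' {} a b \<longleftrightarrow> adj D U a b" for a b
  proof
    assume "adj D' {} a b" then show "adj D U a b" using adjsym unfolding D'_def adj_def by auto
  next
    assume a: "adj D U a b"
    then have "f a \<noteq> f b" using adjV inj unfolding inj_on_def by blast
    then show "adj D' {} a b" using a adjsym unfolding D'_def adj_def
      by (auto simp: linorder_neq_iff)
  qed
  ultimately have "D' \<in> consistent_DAGs V D U" unfolding consistent_DAGs_def is_DAG_def by auto
  moreover have "\<forall>a b. (a,b) \<in> E \<longrightarrow> adj D U a b \<longrightarrow> (a,b) \<in> D'"
    using mono EV unfolding D'_def by auto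
  ultimately show ?thesis by blast
qed

context
  fixes V :: "'v set" and D U :: "('v \<times> 'v) set"
  assumes wf: "wf_pdag V D U" and acyc: "acyclic D" and cl: "\<And>a b. \<not> meek_applicable D U a b"
begin

lemma symU: "(a,b) \<in> U \<Longrightarrow> (b,a) \<in> U" using wf unfolding wf_pdag_def sym_def by blast
lemma DnotU: "(a,b) \<in> D \<Longrightarrow> (a,b) \<notin> U" using wf unfolding wf_pdag_def by blast
lemma DnotD: "(a,b) \<in> D \<Longrightarrow> (b,a) \<notin> D" using wf unfolding wf_pdag_def by blast
lemma R1: "(a,b) \<in> U \<Longrightarrow> (c,a) \<in> D \<Longrightarrow> c \<noteq> b \<Longrightarrow> adj D U c b"
  using cl[of a b] unfolding meek_applicable_def by blast
lemma R2: "(a,b) \<in> U \<Longrightarrow> (a,c) \<in> D \<Longrightarrow> (c,b) \<in> D \<Longrightarrow> False"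
  using cl[of a b] unfolding meek_applicable_def by blast
lemma R4: "(a,b) \<in> U \<Longrightarrow> adj D U a c \<Longrightarrow> (a,d) \<in> U \<Longrightarrow> (d,c) \<in> D \<Longrightarrow> (c,b) \<in> D
   \<Longrightarrow> b \<noteq> d \<Longrightarrow> \<not> adj D U b d \<Longrightarrow> False"
  using cl[of a b] unfolding meek_applicable_def by blast

lemma lemA: "(a,b) \<in> D\<^sup>+ \<Longrightarrow> (a,b) \<notin> U"
proof (induction rule: trancl_induct)
  case (base y) then show ?case using DnotU by blast
next
  case (step y z)
  show ?case
  proof
    assume az: "(a,z) \<in> U"
    have ya: "y \<noteq> a" using step.hyps(1) acyc unfolding acyclic_def by blast
    have "adj D U y a" using R1[OF symU[OF az] step.hyps(2) ya] .
    then consider "(y,a) \<in> D" | "(a,y) \<in> D" | "(y,a) \<in> U" unfolding adj_def by blast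
    then show False
    proof cases
      case 1 then have "(a,a) \<in> D\<^sup>+" using step.hyps(1) by auto
      then show False using acyc unfolding acyclic_def by blast
    next
      case 2 then show False using R2[OF az 2 step.hyps(2)] by blast
    next
      case 3 then show False using step.IH symU by blast
    qed
  qed
qed

lemma lemB:
  assumes path: "is_path V D U p" and pc: "possibly_causal D p" and jn: "j < length p" and ij: "i \<le> j"
  shows "\<forall>m>0. (p!j, p!i) \<notin> D^^m"
  using ij
proof (induction i rule: inc_induct)
  case base
  show ?case using acyc trancl_power unfolding acyclic_def by blast
next
  case (step n)
  have noback: "\<And>k l. k < l \<Longrightarrow> l < length p \<Longrightarrow> (p!l, p!k) \<notin> D"
    using pc unfolding possibly_causal_def by blast
  have sn: "Suc n < length p" using step.hyps jn by auto
  let ?a = "p!n" and ?b = "p!Suc n"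
  have adjab: "adj D U ?a ?b" using path sn unfolding is_path_def by blast
  have toSuc: "\<And>x k. (p!j,x) \<in> D^^k \<Longrightarrow> (x,?b) \<in> D \<Longrightarrow> False"
  proof -
    fix x k assume "(p!j,x) \<in> D^^k" "(x,?b) \<in> D"
    then have "(p!j,?b) \<in> D^^Suc k" by auto
    then show False using step.IH by blast
  qed
  have bca: "\<And>c. (?b,c) \<in> D \<Longrightarrow> (c,?a) \<in> D \<Longrightarrow> (?a,?b) \<in> U \<Longrightarrow> False"
  proof -
    fix c assume "(?b,c) \<in> D" "(c,?a) \<in> D" "(?a,?b) \<in> U"
    then have "(?b,?a) \<in> D\<^sup>+" by auto
    then show False using lemA symU \<open>(?a,?b) \<in> U\<close> by blast
  qed
  have "(p!j,p!n) \<notin> D^^m" if "m > 0" for m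
    using that
  proof (induction m rule: less_induct)
    case (less m)
    show ?case
    proof
      assume pm: "(p!j,p!n) \<in> D^^m"
      obtain m' where m: "m = Suc m'" using less.prems by (cases m) auto
      from pm m obtain c where jc: "(p!j,c) \<in> D^^m'" and cn: "(c,?a) \<in> D"
        by (auto elim: relpow_Suc_E)
      consider "(?a,?b) \<in> D" | "(?b,?a) \<in> D" | "(?a,?b) \<in> U" using adjab unfolding adj_def by blast
      then show False
      proof cases
        case 1 then show False using toSuc[OF pm] by blast
      next
        case 2 then show False using noback sn by blast
      next
        case 3
        have cb: "c \<noteq> ?b" using cn noback sn by auto
        have "adj D U c ?b" using R1[OF 3 cn cb] .
        then consider "(c,?b) \<in> D" | "(?b,c) \<in> D" | "(c,?b) \<in> U" unfolding adj_def by blast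
        then show False
        proof cases
          case 1 then show False using toSuc[OF jc] by blast
        next
          case 2 then show False using bca cn 3 by blast
        next
          case cbU: 3
          show False
          proof (cases m')
            case 0
            then have "c = p!j" using jc by auto
            then show False using cn noback step.hyps jn by blast
          next
            case (Suc m'')
            from jc Suc obtain d where jd: "(p!j,d) \<in> D^^m''" and dc: "(d,c) \<in> D"
              by (auto elim: relpow_Suc_E)
            have db: "d \<noteq> ?b" using bca dc cn 3 by blast
            have "adj D U d ?b" using R1[OF cbU dc db] .
            then consider "(d,?b) \<in> D" | "(?b,d) \<in> D" | "(d,?b) \<in> U" unfolding adj_def by blast
            then show False
            proof cases
              case 1 then show False using toSuc[OF jd] by blast
            next
              case 2 then show False using R2[OF symU[OF cbU] 2 dc] by blast
            next
              case dbU: 3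
              have da: "?a \<noteq> d" using dc cn DnotD by blast
              have nadj: "\<not> adj D U ?a d"
              proof
                assume "adj D U ?a d"
                then consider "(?a,d) \<in> D" | "(d,?a) \<in> D" | "(?a,d) \<in> U" unfolding adj_def by blast
                then show False
                proof cases
                  case 1
                  then have "(?a,?a) \<in> D\<^sup>+" using dc cn by (meson trancl.simps)
                  then show False using acyc unfolding acyclic_def by blast
                next
                  case 2
                  then have "(p!j,?a) \<in> D^^Suc m''" using jd by auto
                  moreover have "Suc m'' < m" using m Suc by simp
                  ultimately show False using less.IH by blast
                next
                  case 3 then show False using R2[OF symU[OF 3] dc cn] by blast
                qed
              qed
              have "adj D U ?b c" using symU[OF cbU] unfolding adj_def by blast
              then show False using R4[OF symU[OF 3] _ symU[OF dbU] dc cn da nadj] by blast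
            qed
          qed
        qed
      qed
    qed
  qed
  then show ?case by blast
qed

lemma lemB':
  assumes "is_path V D U p" "possibly_causal D p" "i < j" "j < length p"
  shows "(p!j, p!i) \<notin> D\<^sup>+"
  using lemB[OF assms(1,2,4), of i] assms(3) by (auto simp: trancl_power)

end

theorem mainTheorem8:
  fixes V :: "'v set" and D U :: "('v \<times> 'v) set" and X Y Z :: "'v set"
  assumes "is_MPDAG V D U"
    and "X \<subseteq> V" and "Y \<subseteq> V" and "Z \<subseteq> V"
    and "X \<inter> Y = {}" and "X \<inter> Z = {}" and "Y \<inter> Z = {}"
    and "\<exists>p. good_path V D U X Y Z p"
  shows "\<exists>q D1 D2. good_path V D U X Y Z q
     \<and> D1 \<in> consistent_DAGs V D U \<and> D2 \<in> consistent_DAGs V D U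
     \<and> (\<forall>i. Suc i < length q \<longrightarrow> (q ! i, q ! Suc i) \<in> D1)
     \<and> (q ! 1, q ! 0) \<in> D2
     \<and> (\<forall>i. 0 < i \<and> Suc i < length q \<longrightarrow> (q ! i, q ! Suc i) \<in> D2)"
proof -
  have wf: "wf_pdag V D U" and acyc: "acyclic D" and cl: "\<And>a b. \<not> meek_applicable D U a b"
    using assms(1) unfolding is_MPDAG_def meek_closure_def by auto
  obtain q where g: "good_path V D U X Y Z q" using assms(8) by blast
  have path: "is_path V D U q" and pc: "possibly_causal D q" and len: "length q \<ge> 2"
    and q01: "(q!0, q!1) \<in> U"
    using g unfolding good_path_def by auto
  have dist: "distinct q" and qV: "set q \<subseteq> V" and qadj: "\<And>i. Suc i < length q \<Longrightarrow> adj D U (q!i) (q!Suc i)"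
    using path unfolding is_path_def by auto
  define r1 where "r1 x = (LEAST i. i < length q \<and> q!i = x)" for x
  have r1q: "r1 (q!i) = i" if "i < length q" for i
    unfolding r1_def
  proof (rule Least_equality)
    show "i < length q \<and> q ! i = q ! i" using that by simp
  next
    fix y assume "y < length q \<and> q ! y = q ! i"
    then show "i \<le> y" using that dist nth_eq_iff_index_eq by blast
  qed
  define r2 where "r2 x = (if r1 x = 0 then 1 else if r1 x = (1::nat) then 0 else r1 x)" for x
  have H1: "r1 a < r1 b" if ab: "a \<in> set q" "b \<in> set q" "(a,b) \<in> D\<^sup>+" for a b
  proof -
    obtain i j where ij: "i < length q" "j < length q" "a = q!i" "b = q!j"
      using ab(1,2) by (metis in_set_conv_nth)
    have "\<not> j < i" using lemB'[OF wf acyc cl path pc _ ij(1), of j] that ij by auto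
    moreover have "i \<noteq> j" using that ij acyc unfolding acyclic_def by auto
    ultimately show ?thesis using ij r1q by auto
  qed
  have H2: "r2 a < r2 b" if ab: "a \<in> set q" "b \<in> set q" "(a,b) \<in> D\<^sup>+" for a b
  proof -
    obtain i j where ij: "i < length q" "j < length q" "a = q!i" "b = q!j"
      using ab(1,2) by (metis in_set_conv_nth)
    have lt: "i < j" using H1[OF that] ij r1q by auto
    have "\<not> (i = 0 \<and> j = 1)" using lemA[OF wf acyc cl] q01 that ij by blast
    then show ?thesis using lt ij r1q unfolding r2_def by auto
  qed
  define E1 where "E1 = {(q!i, q!Suc i) | i. Suc i < length q}"
  define E2 where "E2 = insert (q!1, q!0) {(q!i, q!Suc i) | i. 0 < i \<and> Suc i < length q}"
  have "acyclic (D \<union> E1)"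
  proof (rule acyc_rank[OF acyc, of "set q" r1])
    show "\<And>a b. a \<in> set q \<Longrightarrow> b \<in> set q \<Longrightarrow> (a, b) \<in> D\<^sup>+ \<Longrightarrow> r1 a < r1 b" using H1 by blast
    show "\<And>a b. (a, b) \<in> E1 \<Longrightarrow> a \<in> set q \<and> b \<in> set q \<and> r1 a < r1 b"
      unfolding E1_def using r1q by auto
  qed
  moreover have "E1 \<subseteq> V \<times> V" unfolding E1_def using qV by auto
  ultimately obtain D1 where D1: "D1 \<in> consistent_DAGs V D U"
    and D1E: "\<forall>a b. (a,b) \<in> E1 \<longrightarrow> adj D U a b \<longrightarrow> (a,b) \<in> D1"
    using orient[OF wf] by blast
  have "acyclic (D \<union> E2)"
  proof (rule acyc_rank[OF acyc, of "set q" r2])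
    show "\<And>a b. a \<in> set q \<Longrightarrow> b \<in> set q \<Longrightarrow> (a, b) \<in> D\<^sup>+ \<Longrightarrow> r2 a < r2 b" using H2 by blast
    show "\<And>a b. (a, b) \<in> E2 \<Longrightarrow> a \<in> set q \<and> b \<in> set q \<and> r2 a < r2 b"
    proof -
      fix a b assume e: "(a, b) \<in> E2"
      have l: "0 < length q" "1 < length q" using len by auto
      have "r1 (q!0) = 0" "r1 (q!1) = 1" "q!0 \<in> set q" "q!1 \<in> set q"
        using r1q[OF l(1)] r1q[OF l(2)] l nth_mem by auto
      with e show "a \<in> set q \<and> b \<in> set q \<and> r2 a < r2 b"
        unfolding E2_def r2_def using r1q by auto
    qed
  qed
  moreover have "E2 \<subseteq> V \<times> V" unfolding E2_def using qV len nth_mem[of 0 q] nth_mem[of 1 q] by fastforce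
  ultimately obtain D2 where D2: "D2 \<in> consistent_DAGs V D U"
    and D2E: "\<forall>a b. (a,b) \<in> E2 \<longrightarrow> adj D U a b \<longrightarrow> (a,b) \<in> D2"
    using orient[OF wf] by blast
  have "\<forall>i. Suc i < length q \<longrightarrow> (q ! i, q ! Suc i) \<in> D1"
    using D1E qadj unfolding E1_def by blast
  moreover have "(q ! 1, q ! 0) \<in> D2"
  proof -
    have "adj D U (q!1) (q!0)" using symU[OF wf acyc cl q01] unfolding adj_def by blast
    then show ?thesis using D2E unfolding E2_def by blast
  qed
  moreover have "\<forall>i. 0 < i \<and> Suc i < length q \<longrightarrow> (q ! i, q ! Suc i) \<in> D2"
    using D2E qadj unfolding E2_def by blast
  ultimately show ?thesis using g D1 D2 by blast
qed

end
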